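(* Let $G=(V,E)$ be a non-bipartite graph with $n=|V|\ge 5$ vertices, and let $K,K'$ be $k$-cliques of $G$ where $n-k-1=\binom{k}{2}$. Let $H$ be the bipartite graph with vertex set $V\cup E$ (bipartition $\{V,E\}$) and edge set $\{\{v,e\} : v\in V,\ e\in E,\ v\notin e\}$. Let $p=n-k-1$. Let $S$ be obtained from $(V\setminus K)\cup E(K)$ by removing an arbitrary vertex of $V\setminus K$, and let $S'$ be obtained from $(V\setminus K')\cup E(K')$ by removing an arbitrary vertex of $V\setminus K'$ (so $S,S'$ are $(p,p)$-bicliques of $H$). If there is a TJ-sequence of $(p,p)$-bicliques from $S$ to $S'$ in $H$, then there is a TJ-sequence of $k$-cliques from $K$ to $K'$ in $G$.
   Context: For $U\subseteq V$, $E(U)$ denotes the set of edges of $G$ with both endpoints in $U$. A $k$-clique is a set of $k$ pairwise adjacent vertices. A TJ-sequence of $k$-cliques is a sequence $K_0,\dots,K_\ell$ of $k$-cliques with $|K_i\setminus K_{i+1}|=|K_{i+1}\setminus K_i|=1$ for all $i$. A vertex set $S$ is a $(p,q)$-biclique of $H$ if $H[S]$ is isomorphic to $K_{p,q}$; a TJ-sequence of $(p,p)$-bicliques is a sequence $S_0,\dots,S_\ell$ of $(p,p)$-bicliques with $|S_i\setminus S_{i+1}|=|S_{i+1}\setminus S_i|=1$ for all $i$. *)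

theory Defs
  imports Main
begin

definition simple_graph :: "'a set \<Rightarrow> 'a set set \<Rightarrow> bool" where
  "simple_graph V E \<longleftrightarrow> finite V \<and> (\<forall>e\<in>E. e \<subseteq> V \<and> card e = 2)"

definition bipartite :: "'a set \<Rightarrow> 'a set set \<Rightarrow> bool" where
  "bipartite V E \<longleftrightarrow> (\<exists>A. A \<subseteq> V \<and> (\<forall>e\<in>E. card (e \<inter> A) = 1))"

definition is_clique :: "'a set \<Rightarrow> 'a set set \<Rightarrow> nat \<Rightarrow> 'a set \<Rightarrow> bool" where
  "is_clique V E k K \<longleftrightarrow> K \<subseteq> V \<and> card K = k \<and>
     (\<forall>u\<in>K. \<forall>v\<in>K. u \<noteq> v \<longrightarrow> {u, v} \<in> E)"

definition edges_in :: "'a set set \<Rightarrow> 'a set \<Rightarrow> 'a set set" where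
  "edges_in E U = {e \<in> E. e \<subseteq> U}"

definition is_biclique :: "'b set \<Rightarrow> ('b \<Rightarrow> 'b \<Rightarrow> bool) \<Rightarrow> nat \<Rightarrow> nat \<Rightarrow> 'b set \<Rightarrow> bool" where
  "is_biclique W adj p q S \<longleftrightarrow> S \<subseteq> W \<and>
     (\<exists>A B. A \<inter> B = {} \<and> A \<union> B = S \<and> finite A \<and> finite B \<and> card A = p \<and> card B = q \<and>
        (\<forall>x\<in>S. \<forall>y\<in>S. adj x y \<longleftrightarrow> ((x \<in> A \<and> y \<in> B) \<or> (x \<in> B \<and> y \<in> A))))"

definition tj_step :: "'b set \<Rightarrow> 'b set \<Rightarrow> bool" where
  "tj_step X Y \<longleftrightarrow> card (X - Y) = 1 \<and> card (Y - X) = 1"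

definition tj_reachable :: "('b set \<Rightarrow> bool) \<Rightarrow> 'b set \<Rightarrow> 'b set \<Rightarrow> bool" where
  "tj_reachable P X Y \<longleftrightarrow> (\<exists>xs. xs \<noteq> [] \<and> hd xs = X \<and> last xs = Y \<and>
     (\<forall>Z\<in>set xs. P Z) \<and> (\<forall>i. Suc i < length xs \<longrightarrow> tj_step (xs ! i) (xs ! Suc i)))"

definition H_vertices :: "'a set \<Rightarrow> 'a set set \<Rightarrow> ('a + 'a set) set" where
  "H_vertices V E = Inl ` V \<union> Inr ` E"

definition H_adj :: "'a set \<Rightarrow> 'a set set \<Rightarrow> ('a + 'a set) \<Rightarrow> ('a + 'a set) \<Rightarrow> bool" where
  "H_adj V E x y \<longleftrightarrow>
     (\<exists>v e. v \<in> V \<and> e \<in> E \<and> v \<notin> e \<and> ((x = Inl v \<and> y = Inr e) \<or> (x = Inr e \<and> y = Inl v)))"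

end

theory Submission
  imports Defs
begin

lemma biclique_sides:
  assumes "is_biclique (H_vertices V E) (H_adj V E) p p S" "p \<ge> 1"
  shows "card {v. Inl v \<in> S} = p \<and> card {e. Inr e \<in> S} = p \<and>
    (\<forall>v e. Inl v \<in> S \<longrightarrow> Inr e \<in> S \<longrightarrow> v \<notin> e \<and> e \<in> E \<and> v \<in> V)" (is ?G)
proof -
  obtain A B where AB: "A \<inter> B = {}" "A \<union> B = S" "finite A" "finite B" "card A = p" "card B = p"
    and adj: "\<forall>x\<in>S. \<forall>y\<in>S. H_adj V E x y \<longleftrightarrow> ((x \<in> A \<and> y \<in> B) \<or> (x \<in> B \<and> y \<in> A))"
    using assms(1) unfolding is_biclique_def by blast
  have side: "\<And>A B. A \<inter> B = {} \<Longrightarrow> A \<union> B = S \<Longrightarrow> finite A \<Longrightarrow> finite B \<Longrightarrow> card A = p \<Longrightarrow> card B = p \<Longrightarrow>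
     (\<forall>x\<in>S. \<forall>y\<in>S. H_adj V E x y \<longleftrightarrow> ((x \<in> A \<and> y \<in> B) \<or> (x \<in> B \<and> y \<in> A))) \<Longrightarrow>
     A \<subseteq> range Inl \<Longrightarrow> B \<subseteq> range Inr \<Longrightarrow> ?G"
  proof -
    fix A B assume h: "A \<inter> B = {}" "A \<union> B = S" "finite A" "finite B" "card A = p" "card B = p"
      "(\<forall>x\<in>S. \<forall>y\<in>S. H_adj V E x y \<longleftrightarrow> ((x \<in> A \<and> y \<in> B) \<or> (x \<in> B \<and> y \<in> A)))"
      "A \<subseteq> range Inl" "B \<subseteq> range Inr"
    have e1: "{v. Inl v \<in> S} = Inl -` A" using h by auto
    have e2: "{v. Inr v \<in> S} = Inr -` B" using h by auto
    have i1: "Inl ` (Inl -` A) = A" using h by auto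
    have i2: "Inr ` (Inr -` B) = B" using h by auto
    have "card (Inl -` A) = card (Inl ` (Inl -` A))" by (simp add: card_image)
    then have c1: "card (Inl -` A) = p" using i1 h(5) by metis
    have "card (Inr -` B) = card (Inr ` (Inr -` B))" by (simp add: card_image)
    then have c2: "card (Inr -` B) = p" using i2 h(6) by metis
    have c3: "\<forall>v e. Inl v \<in> S \<longrightarrow> Inr e \<in> S \<longrightarrow> v \<notin> e \<and> e \<in> E \<and> v \<in> V"
    proof (intro allI impI)
      fix v e assume "Inl v \<in> S" "Inr e \<in> S"
      then have "Inl v \<in> A" "Inr e \<in> B" using h by auto
      then have "H_adj V E (Inl v) (Inr e)" using h \<open>Inl v \<in> S\<close> \<open>Inr e \<in> S\<close> by blast
      then show "v \<notin> e \<and> e \<in> E \<and> v \<in> V" unfolding H_adj_def by auto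
    qed
    show ?G using e1 e2 c1 c2 c3 by simp
  qed
  have "A \<noteq> {}" "B \<noteq> {}" using AB assms(2) by auto
  then obtain a b where ab: "a \<in> A" "b \<in> B" by blast
  have "H_adj V E a b" using adj ab AB by blast
  then consider (lr) v e where "a = Inl v" "b = Inr e" | (rl) v e where "a = Inr e" "b = Inl v"
    unfolding H_adj_def by blast
  then show ?thesis
  proof cases
    case lr
    have "A \<subseteq> range Inl"
    proof
      fix x assume "x \<in> A"
      then have "H_adj V E x b" using adj ab AB by blast
      then show "x \<in> range Inl" using lr unfolding H_adj_def by auto
    qed
    moreover have "B \<subseteq> range Inr"
    proof
      fix x assume "x \<in> B"
      then have "H_adj V E a x" using adj ab AB by blast
      then show "x \<in> range Inr" using lr unfolding H_adj_def by auto
    qed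
    ultimately show ?thesis using side[OF AB adj] by blast
  next
    case rl
    have "B \<subseteq> range Inl"
    proof
      fix x assume "x \<in> B"
      then have "H_adj V E a x" using adj ab AB by blast
      then show "x \<in> range Inl" using rl unfolding H_adj_def by auto
    qed
    moreover have "A \<subseteq> range Inr"
    proof
      fix x assume "x \<in> A"
      then have "H_adj V E x b" using adj ab AB by blast
      then show "x \<in> range Inr" using rl unfolding H_adj_def by auto
    qed
    moreover have "\<forall>x\<in>S. \<forall>y\<in>S. H_adj V E x y \<longleftrightarrow> ((x \<in> B \<and> y \<in> A) \<or> (x \<in> A \<and> y \<in> B))"
      using adj by blast
    ultimately show ?thesis using side[of B A] AB by (metis Int_commute Un_commute)
  qed
qed

lemma biclique_in_V:
  assumes "is_biclique (H_vertices V E) (H_adj V E) p p S" "Inl v \<in> S"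
  shows "v \<in> V"
  using assms unfolding is_biclique_def H_vertices_def by auto

lemma tj_snoc:
  assumes "tj_reachable P X Y" "P Z" "tj_step Y Z"
  shows "tj_reachable P X Z"
proof -
  obtain xs where xs: "xs \<noteq> []" "hd xs = X" "last xs = Y" "\<forall>Z\<in>set xs. P Z"
    "\<forall>i. Suc i < length xs \<longrightarrow> tj_step (xs ! i) (xs ! Suc i)"
    using assms(1) unfolding tj_reachable_def by blast
  have "\<forall>i. Suc i < length (xs @ [Z]) \<longrightarrow> tj_step ((xs @ [Z]) ! i) ((xs @ [Z]) ! Suc i)"
  proof (intro allI impI)
    fix i assume i: "Suc i < length (xs @ [Z])"
    show "tj_step ((xs @ [Z]) ! i) ((xs @ [Z]) ! Suc i)"
    proof (cases "Suc i < length xs")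
      case True then show ?thesis using xs(5) by (simp add: nth_append)
    next
      case False
      then have "Suc i = length xs" using i by simp
      then have ii: "i = length xs - 1" by simp
      have "(xs @ [Z]) ! i = Y" using xs(1,3) ii by (simp add: nth_append last_conv_nth)
      moreover have "(xs @ [Z]) ! Suc i = Z" using \<open>Suc i = length xs\<close> by (simp add: nth_append)
      ultimately have "(xs @ [Z]) ! i = Y" "(xs @ [Z]) ! Suc i = Z" by auto
      then show ?thesis using assms(3) by simp
    qed
  qed
  then show ?thesis unfolding tj_reachable_def using xs assms(2)
    by (intro exI[of _ "xs @ [Z]"]) auto
qed

lemma tj_refl: "P X \<Longrightarrow> tj_reachable P X X"
  unfolding tj_reachable_def by (intro exI[of _ "[X]"]) auto

lemma two_subsets:
  assumes "finite W" "card W = Suc k" "C \<subseteq> W" "D \<subseteq> W" "card C = k" "card D = k"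
  shows "C = D \<or> tj_step C D"
proof -
  have "card (W - C) = 1" using assms by (simp add: card_Diff_subset finite_subset)
  then obtain c where c: "W - C = {c}" by (auto simp: card_1_singleton_iff)
  have "card (W - D) = 1" using assms by (simp add: card_Diff_subset finite_subset)
  then obtain d where d: "W - D = {d}" by (auto simp: card_1_singleton_iff)
  have C: "C = W - {c}" using c assms(3) by auto
  have D: "D = W - {d}" using d assms(4) by auto
  show ?thesis
  proof (cases "c = d")
    case True then show ?thesis using C D by simp
  next
    case False
    have "C - D = {d}" "D - C = {c}" using C D c d False by auto
    then show ?thesis unfolding tj_step_def by simp
  qed
qed

lemma reach_extend:
  assumes "tj_reachable (is_clique V E k) K C" "is_clique V E k D" "finite W" "card W = Suc k"
    "C \<subseteq> W" "D \<subseteq> W" "is_clique V E k C"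
  shows "tj_reachable (is_clique V E k) K D"
proof -
  have "C = D \<or> tj_step C D" using two_subsets[OF assms(3,4,5,6)] assms(2,7)
    unfolding is_clique_def by blast
  then show ?thesis using assms(1,2) tj_snoc by metis
qed

lemma step_clique:
  assumes sg: "simple_graph V E" and p: "p = k choose 2" "p \<ge> 1" and cv: "card V = k + 1 + p"
    and bS: "is_biclique (H_vertices V E) (H_adj V E) p p S"
    and bT: "is_biclique (H_vertices V E) (H_adj V E) p p T"
    and st: "tj_step S T" and ne: "V - {v. Inl v \<in> S} \<noteq> V - {v. Inl v \<in> T}"
  shows "\<exists>C. is_clique V E k C \<and> C \<subseteq> V - {v. Inl v \<in> S} \<and> C \<subseteq> V - {v. Inl v \<in> T}"
proof -
  define X where "X = {v. Inl v \<in> S}"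
  define Y where "Y = {v. Inl v \<in> T}"
  define F where "F = {e. Inr e \<in> S}"
  have fV: "finite V" using sg unfolding simple_graph_def by simp
  have sS: "card X = p" "card F = p" "\<forall>v e. Inl v \<in> S \<longrightarrow> Inr e \<in> S \<longrightarrow> v \<notin> e \<and> e \<in> E \<and> v \<in> V"
    using biclique_sides[OF bS p(2)] unfolding X_def F_def by auto
  have sT: "card Y = p" "\<forall>v e. Inl v \<in> T \<longrightarrow> Inr e \<in> T \<longrightarrow> v \<notin> e \<and> e \<in> E \<and> v \<in> V"
    using biclique_sides[OF bT p(2)] unfolding Y_def by auto
  have XV: "X \<subseteq> V" using biclique_in_V[OF bS] unfolding X_def by auto
  have YV: "Y \<subseteq> V" using biclique_in_V[OF bT] unfolding Y_def by auto
  have "X \<noteq> Y" using ne unfolding X_def Y_def by auto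
  have fX: "finite X" "finite Y" using XV YV fV finite_subset by auto
  have "\<not> X \<subseteq> Y"
  proof
    assume "X \<subseteq> Y"
    then have "X = Y" using card_subset_eq[OF fX(2)] sS(1) sT(1) by auto
    then show False using \<open>X \<noteq> Y\<close> by simp
  qed
  then obtain b where b: "b \<in> X" "b \<notin> Y" by blast
  have "\<not> Y \<subseteq> X"
  proof
    assume "Y \<subseteq> X"
    then have "X = Y" using card_subset_eq[OF fX(1)] sS(1) sT(1) by auto
    then show False using \<open>X \<noteq> Y\<close> by simp
  qed
  then obtain a where a: "a \<in> Y" "a \<notin> X" by blast
  have c1: "card (S - T) = 1" "card (T - S) = 1" using st unfolding tj_step_def by auto
  have "Inl b \<in> S - T" using b unfolding X_def Y_def by auto
  then have ST: "S - T = {Inl b}" using c1(1) by (metis card_1_singletonE singletonD)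
  have "Inl a \<in> T - S" using a unfolding X_def Y_def by auto
  then have TS: "T - S = {Inl a}" using c1(2) by (metis card_1_singletonE singletonD)
  define C where "C = V - X - {a}"
  have aV: "a \<in> V" using a YV by auto
  have CS: "C \<subseteq> V - X" unfolding C_def by auto
  have CT: "C \<subseteq> V - Y"
  proof
    fix x assume x: "x \<in> C"
    have "x \<notin> Y"
    proof
      assume "x \<in> Y"
      then have "Inl x \<in> T" unfolding Y_def by simp
      moreover have "Inl x \<notin> S" using x unfolding C_def X_def by auto
      ultimately have "Inl x \<in> T - S" by simp
      then show False using TS x unfolding C_def by auto
    qed
    then show "x \<in> V - Y" using x unfolding C_def by auto
  qed
  have cC: "card C = k"
  proof -
    have "card (V - X) = k + 1" using card_Diff_subset[OF fX(1) XV] cv sS(1) by simp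
    moreover have "a \<in> V - X" using aV a by simp
    ultimately show ?thesis unfolding C_def by (simp add: card_Diff_singleton)
  qed
  have fC: "finite C" using fV unfolding C_def by simp
  have FT: "\<And>e. e \<in> F \<Longrightarrow> Inr e \<in> T" using ST unfolding F_def by auto
  have Fsub: "F \<subseteq> {B. B \<subseteq> C \<and> card B = 2}"
  proof
    fix e assume e: "e \<in> F"
    have eE: "e \<in> E" using e sS(3) b unfolding F_def X_def by blast
    then have "e \<subseteq> V" "card e = 2" using sg unfolding simple_graph_def by auto
    moreover have "\<forall>v\<in>X. v \<notin> e" using sS(3) e unfolding F_def X_def by blast
    moreover have "a \<notin> e" using sT(2) FT[OF e] a unfolding Y_def by blast
    ultimately show "e \<in> {B. B \<subseteq> C \<and> card B = 2}" unfolding C_def by auto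
  qed
  have "card {B. B \<subseteq> C \<and> card B = 2} = k choose 2" using n_subsets[OF fC] cC by simp
  then have Feq: "F = {B. B \<subseteq> C \<and> card B = 2}"
    using card_subset_eq[OF _ Fsub] sS(2) p(1) fC by simp
  have FE: "F \<subseteq> E" using sS(3) b unfolding F_def X_def by blast
  have "is_clique V E k C"
    unfolding is_clique_def
  proof (intro conjI ballI impI)
    show "C \<subseteq> V" unfolding C_def by auto
    show "card C = k" by (rule cC)
    fix x y assume "x \<in> C" "y \<in> C" "x \<noteq> y"
    then have "{x, y} \<in> F" unfolding Feq by auto
    then show "{x, y} \<in> E" using FE by auto
  qed
  then show ?thesis using CS CT unfolding X_def Y_def by blast
qed

lemma W_card:
  assumes sg: "simple_graph V E" and p: "p \<ge> 1" and cv: "card V = k + 1 + p"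
    and bS: "is_biclique (H_vertices V E) (H_adj V E) p p S"
  shows "card (V - {v. Inl v \<in> S}) = Suc k" "finite (V - {v. Inl v \<in> S})"
proof -
  have fV: "finite V" using sg unfolding simple_graph_def by simp
  have c: "card {v. Inl v \<in> S} = p" using biclique_sides[OF bS p] by simp
  have s: "{v. Inl v \<in> S} \<subseteq> V" using biclique_in_V[OF bS] by auto
  show "card (V - {v. Inl v \<in> S}) = Suc k"
    using card_Diff_subset[OF finite_subset[OF s fV] s] c cv by simp
  show "finite (V - {v. Inl v \<in> S})" using fV by simp
qed

theorem lemma4:
  fixes V :: "'a set" and E :: "'a set set" and K K' :: "'a set" and k :: nat and u u' :: 'a
  assumes "simple_graph V E"
    and "\<not> bipartite V E"
    and "card V \<ge> 5"
    and "card V = k + 1 + (k choose 2)"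
    and "is_clique V E k K" and "is_clique V E k K'"
    and "u \<in> V - K" and "u' \<in> V - K'"
    and "tj_reachable (is_biclique (H_vertices V E) (H_adj V E) (card V - k - 1) (card V - k - 1))
           ((Inl ` (V - K) \<union> Inr ` edges_in E K) - {Inl u})
           ((Inl ` (V - K') \<union> Inr ` edges_in E K') - {Inl u'})"
  shows "tj_reachable (is_clique V E k) K K'"
proof -
  define p where "p = card V - k - 1"
  have pk: "p = k choose 2" using assms(4) unfolding p_def by simp
  have cv: "card V = k + 1 + p" using assms(4) pk by simp
  have k2: "k \<ge> 2"
  proof (rule ccontr)
    assume "\<not> k \<ge> 2"
    then have "k = 0 \<or> k = 1" by auto
    then show False using assms(3,4) by (auto simp: binomial_eq_0)
  qed
  have "0 < k choose 2" using k2 zero_less_binomial_iff[of k 2] by blast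
  then have "0 < p" using pk by (simp only:)
  then have p1: "p \<ge> 1" by simp
  define S0 where "S0 = (Inl ` (V - K) \<union> Inr ` edges_in E K) - {Inl u}"
  define S1 where "S1 = (Inl ` (V - K') \<union> Inr ` edges_in E K') - {Inl u'}"
  define B where "B = is_biclique (H_vertices V E) (H_adj V E) p p"
  have r: "tj_reachable B S0 S1" using assms(9) unfolding S0_def S1_def B_def p_def .
  obtain xs where xs: "xs \<noteq> []" "hd xs = S0" "last xs = S1" "\<forall>Z\<in>set xs. B Z"
    "\<forall>i. Suc i < length xs \<longrightarrow> tj_step (xs ! i) (xs ! Suc i)"
    using r unfolding tj_reachable_def by blast
  define W where "W = (\<lambda>S :: ('a + 'a set) set. V - {v. Inl v \<in> S})"
  have KV: "K \<subseteq> V" "K' \<subseteq> V" using assms(5,6) unfolding is_clique_def by auto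
  have WS0: "W S0 = K \<union> {u}" using KV assms(7) unfolding W_def S0_def by auto
  have WS1: "W S1 = K' \<union> {u'}" using KV assms(8) unfolding W_def S1_def by auto
  have Bi: "\<And>i. i < length xs \<Longrightarrow> B (xs ! i)" using xs(4) by auto
  have inv: "\<And>i. i < length xs \<Longrightarrow> \<exists>C. is_clique V E k C \<and> C \<subseteq> W (xs ! i) \<and>
      tj_reachable (is_clique V E k) K C"
  proof -
    fix i assume "i < length xs"
    then show "\<exists>C. is_clique V E k C \<and> C \<subseteq> W (xs ! i) \<and> tj_reachable (is_clique V E k) K C"
    proof (induction i)
      case 0
      have "xs ! 0 = S0" using xs(1,2) by (simp add: hd_conv_nth)
      then show ?case using WS0 tj_refl[of "is_clique V E k" K] assms(5) by auto
    next
      case (Suc i)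
      then obtain C where C: "is_clique V E k C" "C \<subseteq> W (xs ! i)" "tj_reachable (is_clique V E k) K C"
        by auto
      show ?case
      proof (cases "W (xs ! i) = W (xs ! Suc i)")
        case True then show ?thesis using C by auto
      next
        case False
        have bi: "B (xs ! i)" "B (xs ! Suc i)" using Bi Suc.prems by auto
        obtain D where D: "is_clique V E k D" "D \<subseteq> W (xs ! i)" "D \<subseteq> W (xs ! Suc i)"
          using step_clique[OF assms(1) pk p1 cv bi[unfolded B_def] xs(5)[rule_format, OF Suc.prems]]
            False unfolding W_def by blast
        have "tj_reachable (is_clique V E k) K D"
          using reach_extend[OF C(3) D(1) W_card(2)[OF assms(1) p1 cv bi(1)[unfolded B_def]]
             W_card(1)[OF assms(1) p1 cv bi(1)[unfolded B_def]]] C D unfolding W_def by blast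
        then show ?thesis using D by blast
      qed
    qed
  qed
  have last: "xs ! (length xs - 1) = S1" using xs(1,3) by (simp add: last_conv_nth)
  obtain C where C: "is_clique V E k C" "C \<subseteq> W S1" "tj_reachable (is_clique V E k) K C"
    using inv[of "length xs - 1"] xs(1) last by auto
  have bl: "B S1" using xs(4) xs(1,3) by auto
  show ?thesis
    using reach_extend[OF C(3) assms(6) W_card(2)[OF assms(1) p1 cv bl[unfolded B_def]]
             W_card(1)[OF assms(1) p1 cv bl[unfolded B_def]]] C WS1 unfolding W_def by blast
qed

end
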